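(* Let $G=K_{n_1,n_2,\dots,n_k}$ be a complete $k$-partite graph with $n_i\geq 1$ for all $i$. Then $\eta(G)$ equals $k$ plus the maximum size of a matching in the complete multipartite graph $K_{n_1-1,n_2-1,\dots,n_k-1}$.
   Context: All graphs are finite, simple and undirected. $K_{n_1,\dots,n_k}$ is the graph whose vertex set is partitioned into $k$ classes of sizes $n_1,\dots,n_k$ (classes may be empty), with two vertices adjacent if and only if they lie in different classes. A graph $H$ is a minor of $G$ if $H$ can be obtained from a subgraph of $G$ by contracting edges. The Hadwiger number $\eta(G)$ is the largest $t$ such that the complete graph $K_t$ is a minor of $G$. A matching is a set of pairwise disjoint edges. *)

theory Defs
  imports Main
begin

type_synonym 'a graph = "'a set \<times> 'a set set"

definition graph :: "'a graph \<Rightarrow> bool" where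
  "graph G \<longleftrightarrow> finite (fst G) \<and> (\<forall>e\<in>snd G. e \<subseteq> fst G \<and> card e = 2)"

definition subgraph :: "'a graph \<Rightarrow> 'a graph \<Rightarrow> bool" where
  "subgraph H G \<longleftrightarrow> fst H \<subseteq> fst G \<and> snd H \<subseteq> snd G \<and> (\<forall>e\<in>snd H. e \<subseteq> fst H)"

definition contract :: "'a graph \<Rightarrow> 'a \<Rightarrow> 'a \<Rightarrow> 'a graph" where
  "contract G u v = (fst G - {v},
     {e\<in>snd G. v \<notin> e} \<union> {{u, w} | w. {v, w} \<in> snd G \<and> w \<noteq> u})"

inductive contracts_to :: "'a graph \<Rightarrow> 'a graph \<Rightarrow> bool" where
  refl: "contracts_to G G"
| step: "contracts_to G H \<Longrightarrow> {u, v} \<in> snd H \<Longrightarrow> u \<noteq> v \<Longrightarrow> contracts_to G (contract H u v)"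

definition graph_iso :: "'a graph \<Rightarrow> 'b graph \<Rightarrow> bool" where
  "graph_iso G H \<longleftrightarrow> (\<exists>f. bij_betw f (fst G) (fst H) \<and>
     (\<forall>x\<in>fst G. \<forall>y\<in>fst G. {x, y} \<in> snd G \<longleftrightarrow> {f x, f y} \<in> snd H))"

definition minor :: "'b graph \<Rightarrow> 'a graph \<Rightarrow> bool" where
  "minor H G \<longleftrightarrow> (\<exists>S M. subgraph S G \<and> contracts_to S M \<and> graph_iso M H)"

definition complete_graph :: "nat \<Rightarrow> nat graph" where
  "complete_graph t = ({..<t}, {{i, j} | i j. i < t \<and> j < t \<and> i \<noteq> j})"

definition hadwiger :: "'a graph \<Rightarrow> nat" where
  "hadwiger G = Max {t. minor (complete_graph t) G}"

definition matching :: "'a graph \<Rightarrow> 'a set set \<Rightarrow> bool" where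
  "matching G M \<longleftrightarrow> M \<subseteq> snd G \<and> (\<forall>e\<in>M. \<forall>f\<in>M. e \<noteq> f \<longrightarrow> e \<inter> f = {})"

definition matching_number :: "'a graph \<Rightarrow> nat" where
  "matching_number G = Max {card M | M. matching G M}"

text \<open>Complete multipartite graph K_{n_0,...,n_{k-1}}: vertex (i,j) is the j-th vertex of
  class i (i < k, j < n i); two vertices are adjacent iff they lie in different classes.\<close>
definition complete_multipartite :: "nat \<Rightarrow> (nat \<Rightarrow> nat) \<Rightarrow> (nat \<times> nat) graph" where
  "complete_multipartite k n =
     ({(i, j). i < k \<and> j < n i},
      {{(i, j), (i', j')} | i j i' j'. i < k \<and> j < n i \<and> i' < k \<and> j' < n i' \<and> i \<noteq> i'})"

end

theory Submission
  imports Defs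
begin


lemma cm_V: "fst (complete_multipartite k n) = {(i,j). i<k \<and> j<n i}"
  by (simp add: complete_multipartite_def)

lemma cm_V_Sigma: "fst (complete_multipartite k n) = Sigma {..<k} (\<lambda>i. {..<n i})"
  by (auto simp: complete_multipartite_def)

lemma cm_finite: "finite (fst (complete_multipartite k n))"
  unfolding cm_V_Sigma by auto

lemma cm_E: "e \<in> snd (complete_multipartite k n) \<longleftrightarrow>
   (\<exists>a b. e = {a,b} \<and> a \<in> fst (complete_multipartite k n) \<and> b \<in> fst (complete_multipartite k n) \<and> fst a \<noteq> fst b)"
  unfolding complete_multipartite_def by force

definition inv_model :: "(nat\<times>nat) set \<Rightarrow> (nat\<times>nat) graph \<Rightarrow> ((nat\<times>nat) \<Rightarrow> (nat\<times>nat) set) \<Rightarrow> bool" where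
"inv_model V M \<beta> \<longleftrightarrow>
 (\<forall>e\<in>snd M. \<exists>x y. e = {x,y} \<and> x \<noteq> y \<and> x \<in> fst M \<and> y \<in> fst M) \<and>
 (\<forall>x\<in>fst M. \<beta> x \<noteq> {} \<and> \<beta> x \<subseteq> V) \<and>
 (\<forall>x\<in>fst M. \<forall>y\<in>fst M. x \<noteq> y \<longrightarrow> \<beta> x \<inter> \<beta> y = {}) \<and>
 (\<forall>x\<in>fst M. (\<exists>a. \<beta> x = {a}) \<or> (\<exists>a\<in>\<beta> x. \<exists>b\<in>\<beta> x. fst a \<noteq> fst b)) \<and>
 (\<forall>x y. {x,y} \<in> snd M \<longrightarrow> (\<exists>a\<in>\<beta> x. \<exists>b\<in>\<beta> y. fst a \<noteq> fst b))"

lemma inv_step: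
  assumes I: "inv_model V H \<beta>" and e: "{u,v} \<in> snd H" and uv: "u \<noteq> v"
  shows "inv_model V (contract H u v) (\<beta>(u := \<beta> u \<union> \<beta> v))"
proof -
  let ?b = "\<beta>(u := \<beta> u \<union> \<beta> v)"
  have E: "\<forall>e\<in>snd H. \<exists>x y. e = {x,y} \<and> x \<noteq> y \<and> x \<in> fst H \<and> y \<in> fst H"
   and NE: "\<forall>x\<in>fst H. \<beta> x \<noteq> {} \<and> \<beta> x \<subseteq> V"
   and D: "\<forall>x\<in>fst H. \<forall>y\<in>fst H. x \<noteq> y \<longrightarrow> \<beta> x \<inter> \<beta> y = {}"
   and SC: "\<forall>x\<in>fst H. (\<exists>a. \<beta> x = {a}) \<or> (\<exists>a\<in>\<beta> x. \<exists>b\<in>\<beta> x. fst a \<noteq> fst b)"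
   and W: "\<forall>x y. {x,y} \<in> snd H \<longrightarrow> (\<exists>a\<in>\<beta> x. \<exists>b\<in>\<beta> y. fst a \<noteq> fst b)"
    using I unfolding inv_model_def by blast+
  have uH: "u \<in> fst H" "v \<in> fst H"
  proof -
    obtain x y where "{u,v} = {x,y}" "x \<in> fst H" "y \<in> fst H" using E e by blast
    then show "u \<in> fst H" "v \<in> fst H" by (auto simp: doubleton_eq_iff)
  qed
  have sup: "\<And>x. \<beta> x \<subseteq> ?b x" by auto
  have cuv: "\<exists>a\<in>\<beta> u. \<exists>b\<in>\<beta> v. fst a \<noteq> fst b" using W e by blast
  have V': "fst (contract H u v) = fst H - {v}" by (simp add: contract_def)
  have E': "snd (contract H u v) = {e\<in>snd H. v \<notin> e} \<union> {{u, w} | w. {v, w} \<in> snd H \<and> w \<noteq> u}"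
    by (simp add: contract_def)
  have c1: "\<forall>e\<in>snd (contract H u v). \<exists>x y. e = {x,y} \<and> x \<noteq> y \<and> x \<in> fst (contract H u v) \<and> y \<in> fst (contract H u v)"
  proof
    fix e assume "e \<in> snd (contract H u v)"
    then consider "e \<in> snd H" "v \<notin> e" | w where "e = {u,w}" "{v,w} \<in> snd H" "w \<noteq> u"
      unfolding E' by blast
    then show "\<exists>x y. e = {x,y} \<and> x \<noteq> y \<and> x \<in> fst (contract H u v) \<and> y \<in> fst (contract H u v)"
    proof cases
      case 1
      then show ?thesis using E unfolding V' by blast
    next
      case 2
      obtain x y where xy: "{v,w} = {x,y}" "x \<noteq> y" "x \<in> fst H" "y \<in> fst H" using E 2(2) by blast
      then have "w \<in> fst H" "w \<noteq> v" by (auto simp: doubleton_eq_iff)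
      then show ?thesis using 2 uH uv unfolding V' by blast
    qed
  qed
  have c2: "\<forall>x\<in>fst (contract H u v). ?b x \<noteq> {} \<and> ?b x \<subseteq> V"
    using NE uH unfolding V' by auto
  have c3: "\<forall>x\<in>fst (contract H u v). \<forall>y\<in>fst (contract H u v). x \<noteq> y \<longrightarrow> ?b x \<inter> ?b y = {}"
  proof (intro ballI impI)
    fix x y assume x: "x \<in> fst (contract H u v)" and y: "y \<in> fst (contract H u v)" and xy: "x \<noteq> y"
    have xH: "x \<in> fst H" "x \<noteq> v" and yH: "y \<in> fst H" "y \<noteq> v" using x y unfolding V' by auto
    show "?b x \<inter> ?b y = {}"
    proof (cases "x = u")
      case True
      then have "y \<noteq> u" using xy by auto
      then have "\<beta> u \<inter> \<beta> y = {}" "\<beta> v \<inter> \<beta> y = {}" using D uH yH by auto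
      then show ?thesis using True \<open>y \<noteq> u\<close> by auto
    next
      case False
      show ?thesis
      proof (cases "y = u")
        case True
        then have "\<beta> x \<inter> \<beta> u = {}" "\<beta> x \<inter> \<beta> v = {}" using D uH xH False by auto
        then show ?thesis using True False by auto
      next
        case False2: False
        then show ?thesis using D xH yH xy False by auto
      qed
    qed
  qed
  have c4: "\<forall>x\<in>fst (contract H u v). (\<exists>a. ?b x = {a}) \<or> (\<exists>a\<in>?b x. \<exists>b\<in>?b x. fst a \<noteq> fst b)"
  proof
    fix x assume "x \<in> fst (contract H u v)"
    show "(\<exists>a. ?b x = {a}) \<or> (\<exists>a\<in>?b x. \<exists>b\<in>?b x. fst a \<noteq> fst b)"
    proof (cases "x = u")
      case True
      then show ?thesis using cuv by auto
    next
      case False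
      then show ?thesis using SC \<open>x \<in> fst (contract H u v)\<close> unfolding V' by auto
    qed
  qed
  have c5: "\<forall>x y. {x,y} \<in> snd (contract H u v) \<longrightarrow> (\<exists>a\<in>?b x. \<exists>b\<in>?b y. fst a \<noteq> fst b)"
  proof (intro allI impI)
    fix x y assume "{x,y} \<in> snd (contract H u v)"
    then consider "{x,y} \<in> snd H" | w where "{x,y} = {u,w}" "{v,w} \<in> snd H" "w \<noteq> u"
      unfolding E' by blast
    then show "\<exists>a\<in>?b x. \<exists>b\<in>?b y. fst a \<noteq> fst b"
    proof cases
      case 1
      then show ?thesis using W sup by blast
    next
      case 2
      have w1: "\<exists>a\<in>\<beta> v. \<exists>b\<in>\<beta> w. fst a \<noteq> fst b" using W 2(2) by blast
      have w2: "\<exists>a\<in>\<beta> w. \<exists>b\<in>\<beta> v. fst a \<noteq> fst b" using W 2(2) by (metis insert_commute)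
      from 2(1) have "(x = u \<and> y = w) \<or> (x = w \<and> y = u)" by (auto simp: doubleton_eq_iff)
      then show ?thesis
      proof
        assume "x = u \<and> y = w" then show ?thesis using w1 2(3) by auto
      next
        assume "x = w \<and> y = u" then show ?thesis using w2 2(3) by auto
      qed
    qed
  qed
  show ?thesis unfolding inv_model_def using c1 c2 c3 c4 c5 by blast
qed

lemma model_exists:
  assumes "contracts_to S M" "subgraph S (complete_multipartite k n)"
  shows "\<exists>\<beta>. inv_model (fst (complete_multipartite k n)) M \<beta>"
  using assms
proof induction
  case (refl S)
  have "inv_model (fst (complete_multipartite k n)) S (\<lambda>x. {x})"
    unfolding inv_model_def
  proof (intro conjI)
    show "\<forall>e\<in>snd S. \<exists>x y. e = {x,y} \<and> x \<noteq> y \<and> x \<in> fst S \<and> y \<in> fst S"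
    proof
      fix e assume e: "e \<in> snd S"
      then have "e \<in> snd (complete_multipartite k n)" "e \<subseteq> fst S"
        using refl unfolding subgraph_def by auto
      then obtain a b where "e = {a,b}" "fst a \<noteq> fst b" unfolding cm_E by blast
      then show "\<exists>x y. e = {x,y} \<and> x \<noteq> y \<and> x \<in> fst S \<and> y \<in> fst S"
        using \<open>e \<subseteq> fst S\<close> by blast
    qed
    show "\<forall>x\<in>fst S. {x} \<noteq> {} \<and> {x} \<subseteq> fst (complete_multipartite k n)"
      using refl unfolding subgraph_def by auto
    show "\<forall>x y. {x, y} \<in> snd S \<longrightarrow> (\<exists>a\<in>{x}. \<exists>b\<in>{y}. fst a \<noteq> fst b)"
    proof (intro allI impI)
      fix x y assume "{x,y} \<in> snd S"
      then have "{x,y} \<in> snd (complete_multipartite k n)"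
        using refl unfolding subgraph_def by auto
      then obtain a b where "{x,y} = {a,b}" "fst a \<noteq> fst b" unfolding cm_E by auto
      then show "\<exists>a\<in>{x}. \<exists>b\<in>{y}. fst a \<noteq> fst b" by (auto simp: doubleton_eq_iff)
    qed
  qed auto
  then show ?case by blast
next
  case (step S H u v)
  then obtain \<beta> where "inv_model (fst (complete_multipartite k n)) H \<beta>" by blast
  then show ?case using inv_step step by blast
qed

lemma cm_finE: "finite (snd (complete_multipartite k n))"
proof -
  have "snd (complete_multipartite k n) \<subseteq> Pow (fst (complete_multipartite k n))"
  proof
    fix e assume "e \<in> snd (complete_multipartite k n)"
    then obtain a b where "e = {a,b}" "a \<in> fst (complete_multipartite k n)" "b \<in> fst (complete_multipartite k n)"
      unfolding cm_E by blast
    then show "e \<in> Pow (fst (complete_multipartite k n))" by auto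
  qed
  then show ?thesis using finite_subset cm_finite by (metis finite_Pow_iff)
qed

lemma mn_fin: "finite {card M | M. matching (complete_multipartite k n) M}"
proof -
  have "{card M | M. matching (complete_multipartite k n) M} \<subseteq> card ` Pow (snd (complete_multipartite k n))"
  proof
    fix x assume "x \<in> {card M | M. matching (complete_multipartite k n) M}"
    then obtain M where "x = card M" "M \<subseteq> snd (complete_multipartite k n)" unfolding matching_def by blast
    then show "x \<in> card ` Pow (snd (complete_multipartite k n))" by blast
  qed
  moreover have "finite (card ` Pow (snd (complete_multipartite k n)))" using cm_finE by simp
  ultimately show ?thesis using finite_subset by blast
qed

lemma mn_ge: "matching (complete_multipartite k n) M \<Longrightarrow> card M \<le> matching_number (complete_multipartite k n)"
  unfolding matching_number_def using mn_fin by (intro Max_ge) auto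

lemma mn_ex: "\<exists>M. matching (complete_multipartite k n) M \<and> card M = matching_number (complete_multipartite k n)"
proof -
  have "matching (complete_multipartite k n) {}" unfolding matching_def by auto
  then have "{card M | M. matching (complete_multipartite k n) M} \<noteq> {}" by blast
  from Max_in[OF mn_fin this] show ?thesis unfolding matching_number_def by auto
qed

definition sw :: "nat \<Rightarrow> nat \<Rightarrow> nat \<Rightarrow> nat" where
  "sw a b j = (if j = a then b else if j = b then a else j)"

lemma sw_inj: "sw a b x = sw a b y \<Longrightarrow> x = y"
  by (auto simp: sw_def split: if_splits)

lemma sw_lt: "j < N \<Longrightarrow> j \<noteq> r \<Longrightarrow> r < N \<Longrightarrow> sw r (N - 1) j < N - 1"
  by (auto simp: sw_def)


definition crs :: "(nat\<times>nat) set \<Rightarrow> (nat\<times>nat) set \<Rightarrow> bool" where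
  "crs A B \<longleftrightarrow> (\<exists>a\<in>A. \<exists>b\<in>B. fst a \<noteq> fst b)"

lemma crs_sym: "crs A B \<longleftrightarrow> crs B A"
  unfolding crs_def by metis

lemma crs_Un: "crs (A \<union> B) C \<longleftrightarrow> crs A C \<or> crs B C"
  unfolding crs_def by blast

lemma crs_mono: "crs A B \<Longrightarrow> A \<subseteq> A' \<Longrightarrow> B \<subseteq> B' \<Longrightarrow> crs A' B'"
  unfolding crs_def by blast

definition edges_of :: "(nat\<times>nat) set \<Rightarrow> ((nat\<times>nat) \<Rightarrow> (nat\<times>nat) set) \<Rightarrow> (nat\<times>nat) set set" where
  "edges_of W \<beta> = {{x,y} | x y. x \<in> W \<and> y \<in> W \<and> x \<noteq> y \<and> crs (\<beta> x) (\<beta> y)}"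

lemma mem_edges: "e \<in> edges_of W \<beta> \<longleftrightarrow> (\<exists>x y. e = {x,y} \<and> x \<in> W \<and> y \<in> W \<and> x \<noteq> y \<and> crs (\<beta> x) (\<beta> y))"
  unfolding edges_of_def by blast

lemma mem_edges2: "{x,y} \<in> edges_of W \<beta> \<longleftrightarrow> x \<in> W \<and> y \<in> W \<and> x \<noteq> y \<and> crs (\<beta> x) (\<beta> y)"
proof
  assume "{x,y} \<in> edges_of W \<beta>"
  then obtain x' y' where h: "{x,y} = {x',y'}" "x' \<in> W" "y' \<in> W" "x' \<noteq> y'" "crs (\<beta> x') (\<beta> y')"
    unfolding mem_edges by blast
  from h(1) have "(x = x' \<and> y = y') \<or> (x = y' \<and> y = x')" by (simp add: doubleton_eq_iff)
  then show "x \<in> W \<and> y \<in> W \<and> x \<noteq> y \<and> crs (\<beta> x) (\<beta> y)"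
    using h crs_sym by blast
next
  assume "x \<in> W \<and> y \<in> W \<and> x \<noteq> y \<and> crs (\<beta> x) (\<beta> y)"
  then show "{x,y} \<in> edges_of W \<beta>" unfolding mem_edges by blast
qed

lemma contract_step:
  assumes u: "u \<in> W" and v: "v \<in> W" and uv: "u \<noteq> v" and c: "crs (\<beta> u) (\<beta> v)"
  shows "contract (W, edges_of W \<beta>) u v = (W - {v}, edges_of (W - {v}) (\<beta>(u := \<beta> u \<union> \<beta> v)))"
proof -
  let ?b = "\<beta>(u := \<beta> u \<union> \<beta> v)"
  have "{e \<in> edges_of W \<beta>. v \<notin> e} \<union> {{u, w} | w. {v, w} \<in> edges_of W \<beta> \<and> w \<noteq> u}
        = edges_of (W - {v}) ?b" (is "?L = ?R")
  proof
    show "?L \<subseteq> ?R"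
    proof
      fix e assume "e \<in> ?L"
      then consider "e \<in> edges_of W \<beta>" "v \<notin> e" | w where "e = {u,w}" "{v,w} \<in> edges_of W \<beta>" "w \<noteq> u"
        by blast
      then show "e \<in> ?R"
      proof cases
        case 1
        then obtain x y where xy: "e = {x,y}" "x \<in> W" "y \<in> W" "x \<noteq> y" "crs (\<beta> x) (\<beta> y)"
          unfolding mem_edges by blast
        have "crs (?b x) (?b y)" by (rule crs_mono[OF xy(5)]) auto
        then show ?thesis using xy 1(2) unfolding mem_edges by blast
      next
        case 2
        then have w: "w \<in> W" "w \<noteq> v" "crs (\<beta> v) (\<beta> w)" unfolding mem_edges2 by auto
        have "crs (?b u) (?b w)" by (rule crs_mono[OF w(3)]) (use 2(3) in auto)
        then show ?thesis unfolding 2(1) mem_edges2 using w u uv 2(3) by auto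
      qed
    qed
    show "?R \<subseteq> ?L"
    proof
      have inL1: "e \<in> ?L" if "e \<in> edges_of W \<beta>" "v \<notin> e" for e using that by (intro UnI1) simp
      have inL2: "{u,w} \<in> ?L" if "{v,w} \<in> edges_of W \<beta>" "w \<noteq> u" for w using that by (intro UnI2) blast
      fix e assume "e \<in> ?R"
      then obtain x y where xy: "e = {x,y}" "x \<in> W - {v}" "y \<in> W - {v}" "x \<noteq> y" "crs (?b x) (?b y)"
        unfolding mem_edges by blast
      show "e \<in> ?L"
      proof (cases "x = u")
        case True
        then have yu: "y \<noteq> u" using xy by auto
        then have "crs (\<beta> u) (\<beta> y) \<or> crs (\<beta> v) (\<beta> y)" using xy(5) True by (simp add: crs_Un)
        then show ?thesis
        proof
          assume "crs (\<beta> u) (\<beta> y)"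
          then have "{u,y} \<in> edges_of W \<beta>" using xy u yu unfolding mem_edges2 by auto
          moreover have "v \<notin> {u,y}" using xy uv by auto
          ultimately show ?thesis using xy True inL1 by simp
        next
          assume "crs (\<beta> v) (\<beta> y)"
          then have "{v,y} \<in> edges_of W \<beta>" using xy v unfolding mem_edges2 by auto
          then show ?thesis using xy True yu inL2 by simp
        qed
      next
        case False
        show ?thesis
        proof (cases "y = u")
          case True
          then have "crs (?b x) (\<beta> u \<union> \<beta> v)" using xy(5) by simp
          then have "crs (\<beta> x) (\<beta> u \<union> \<beta> v)" using False by simp
          then have "crs (\<beta> u) (\<beta> x) \<or> crs (\<beta> v) (\<beta> x)" by (metis crs_Un crs_sym)
          then show ?thesis
          proof
            assume "crs (\<beta> u) (\<beta> x)"
            then have "{u,x} \<in> edges_of W \<beta>" using xy u True unfolding mem_edges2 by auto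
            moreover have "v \<notin> {u,x}" using xy uv by auto
            moreover have "e = {u,x}" using xy True by (simp add: insert_commute)
            ultimately show ?thesis using inL1 by simp
          next
            assume "crs (\<beta> v) (\<beta> x)"
            then have "{v,x} \<in> edges_of W \<beta>" using xy v unfolding mem_edges2 by auto
            moreover have "e = {u,x}" using xy True by (simp add: insert_commute)
            ultimately show ?thesis using False inL2 by simp
          qed
        next
          case False2: False
          then have "crs (\<beta> x) (\<beta> y)" using xy(5) False by simp
          then have "{x,y} \<in> edges_of W \<beta>" using xy unfolding mem_edges2 by auto
          moreover have "v \<notin> {x,y}" using xy by auto
          ultimately show ?thesis using xy inL1 by simp
        qed
      qed
    qed
  qed
  then show ?thesis unfolding contract_def by simp
qed

definition rp :: "(nat\<times>nat) set \<Rightarrow> nat\<times>nat" where "rp e = (SOME x. x \<in> e)"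
definition op :: "(nat\<times>nat) set \<Rightarrow> nat\<times>nat" where "op e = the_elem (e - {rp e})"

lemma rp_op:
  assumes "e = {c,d}" "c \<noteq> d"
  shows "rp e \<in> e" "op e \<in> e" "rp e \<noteq> op e" "e = {rp e, op e}"
proof -
  show r: "rp e \<in> e" unfolding rp_def using assms by (metis insertI1 someI)
  have "rp e = c \<or> rp e = d" using r assms(1) by simp
  then have dj: "e - {rp e} = {d} \<or> e - {rp e} = {c}"
  proof
    assume "rp e = c" then show ?thesis using assms by auto
  next
    assume "rp e = d" then show ?thesis using assms by auto
  qed
  have o: "e - {rp e} = {op e}"
  proof (cases "e - {rp e} = {d}")
    case True
    then show ?thesis unfolding op_def by simp
  next
    case False
    then have "e - {rp e} = {c}" using dj by blast
    then show ?thesis unfolding op_def by simp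
  qed
  then show "op e \<in> e" "rp e \<noteq> op e" by auto
  show "e = {rp e, op e}" by (metis insert_Diff o r)
qed

definition bt :: "(nat\<times>nat) set set \<Rightarrow> (nat\<times>nat) \<Rightarrow> (nat\<times>nat) set" where
  "bt F x = {x} \<union> \<Union>{e\<in>F. rp e = x}"

lemma contract_family:
  "finite F \<Longrightarrow> (\<forall>e\<in>F. \<exists>c d. e = {c,d} \<and> fst c \<noteq> fst d) \<Longrightarrow> (\<forall>e\<in>F. e \<subseteq> U)
   \<Longrightarrow> (\<forall>e\<in>F. \<forall>e'\<in>F. e \<noteq> e' \<longrightarrow> e \<inter> e' = {})
   \<Longrightarrow> contracts_to (U, edges_of U (\<lambda>x. {x})) (U - op ` F, edges_of (U - op ` F) (bt F))"
proof (induction F rule: finite_induct)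
  case empty
  have "bt {} = (\<lambda>x. {x})" by (rule ext) (simp add: bt_def)
  then show ?case by (simp add: contracts_to.refl)
next
  case (insert e F)
  let ?W = "U - op ` F"
  from bspec[OF insert.prems(1) insertI1] obtain c d where cd: "e = {c,d}" "fst c \<noteq> fst d" by blast
  then have "c \<noteq> d" by auto
  note ro = rp_op[OF cd(1) this]
  define u where "u = rp e"
  define v where "v = op e"
  have uv12: "u \<noteq> v" "e = {u,v}" using ro unfolding u_def v_def by auto
  have "u \<in> {c,d}" "v \<in> {c,d}" using ro cd(1) unfolding u_def v_def by auto
  then have "fst u \<noteq> fst v" using uv12(1) cd(2) by auto
  note uv = uv12 this
  have disj: "e \<inter> e' = {}" if "e' \<in> F" for e'
  proof -
    have "e \<noteq> e'" using insert.hyps(2) that by auto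
    then show ?thesis using bspec[OF bspec[OF insert.prems(3) insertI1], of e'] that by simp
  qed
  have opF: "op e' \<in> e'" "rp e' \<in> e'" if "e' \<in> F" for e'
  proof -
    have "e' \<in> insert e F" using that by simp
    from bspec[OF insert.prems(1) this] obtain c' d' where "e' = {c',d'}" "fst c' \<noteq> fst d'" by blast
    then have "e' = {c',d'}" "c' \<noteq> d'" by auto
    from rp_op[OF this] show "op e' \<in> e'" "rp e' \<in> e'" by auto
  qed
  have eU: "e \<subseteq> U" using bspec[OF insert.prems(2) insertI1] .
  have uW: "u \<in> ?W"
  proof -
    have "u \<notin> op ` F" using disj opF uv by blast
    then show ?thesis using eU uv by auto
  qed
  have vW: "v \<in> ?W"
  proof -
    have "v \<notin> op ` F" using disj opF uv by blast
    then show ?thesis using eU uv by auto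
  qed
  have btv: "bt F v = {v}"
  proof -
    have "{e'\<in>F. rp e' = v} = {}" using disj opF uv by blast
    then show ?thesis unfolding bt_def by (metis Union_empty Un_empty_right)
  qed
  have cr: "crs (bt F u) (bt F v)" unfolding crs_def bt_def using uv by blast
  have IH: "contracts_to (U, edges_of U (\<lambda>x. {x})) (?W, edges_of ?W (bt F))"
    using insert.IH insert.prems by auto
  have edge0: "{u,v} \<in> edges_of ?W (bt F)" unfolding mem_edges2 using uW vW uv cr by blast
  then have edge: "{u,v} \<in> snd (?W, edges_of ?W (bt F))" by simp
  have step: "contracts_to (U, edges_of U (\<lambda>x. {x})) (contract (?W, edges_of ?W (bt F)) u v)"
    by (rule contracts_to.step[OF IH edge uv(1)])
  have eq1: "contract (?W, edges_of ?W (bt F)) u v = (?W - {v}, edges_of (?W - {v}) ((bt F)(u := bt F u \<union> bt F v)))"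
    by (rule contract_step[OF uW vW uv(1) cr])
  have eq2: "?W - {v} = U - op ` insert e F" unfolding v_def by auto
  have eq3: "(bt F)(u := bt F u \<union> bt F v) = bt (insert e F)"
  proof (rule ext)
    fix x
    show "((bt F)(u := bt F u \<union> bt F v)) x = bt (insert e F) x"
    proof (cases "x = u")
      case True
      have "{e'\<in>insert e F. rp e' = x} = insert e {e'\<in>F. rp e' = x}" using True u_def by auto
      then have "bt (insert e F) x = {x} \<union> e \<union> \<Union>{e'\<in>F. rp e' = x}" unfolding bt_def by auto
      then show ?thesis using True btv uv(2) unfolding bt_def by auto
    next
      case False
      have "{e'\<in>insert e F. rp e' = x} = {e'\<in>F. rp e' = x}" using False u_def by auto
      then show ?thesis using False unfolding bt_def by simp
    qed
  qed
  show ?case using step unfolding eq1 eq2 eq3 .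
qed



lemma kg: "a < t \<Longrightarrow> b < t \<Longrightarrow> ({a,b} \<in> snd (complete_graph t) \<longleftrightarrow> a \<noteq> b)"
proof -
  assume a: "a < t" and b: "b < t"
  show ?thesis
  proof
    assume "{a,b} \<in> snd (complete_graph t)"
    then obtain i j where "{a,b} = {i,j}" "i \<noteq> j" unfolding complete_graph_def by auto
    then show "a \<noteq> b" by (auto simp: doubleton_eq_iff)
  next
    assume "a \<noteq> b"
    then show "{a,b} \<in> snd (complete_graph t)" using a b unfolding complete_graph_def by auto
  qed
qed

lemma lower:
  assumes n1: "\<forall>i<k. n i \<ge> 1"
  shows "minor (complete_graph (k + matching_number (complete_multipartite k (\<lambda>i. n i - 1)))) (complete_multipartite k n)"
proof -
  let ?G = "complete_multipartite k n"
  let ?K = "complete_multipartite k (\<lambda>i. n i - 1)"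
  obtain Ms where Ms: "matching ?K Ms" "card Ms = matching_number ?K" using mn_ex by blast
  have MsE: "Ms \<subseteq> snd ?K" and Msd: "\<forall>e\<in>Ms. \<forall>f\<in>Ms. e \<noteq> f \<longrightarrow> e \<inter> f = {}"
    using Ms(1) unfolding matching_def by auto
  have finMs: "finite Ms" using finite_subset[OF MsE cm_finE] .
  define s where "s v = (fst v, Suc (snd v))" for v :: "nat \<times> nat"
  have injs: "inj s" by (rule injI) (auto simp: s_def prod_eq_iff)
  define F where "F = image s ` Ms"
  define T where "T = (\<lambda>i. (i, 0::nat)) ` {..<k}"
  define U where "U = T \<union> \<Union>F"
  have finF: "finite F" unfolding F_def using finMs by simp
  have Fform: "\<exists>c d. e = {c,d} \<and> fst c \<noteq> fst d \<and> c \<in> fst ?G \<and> d \<in> fst ?G \<and> snd c \<ge> 1 \<and> snd d \<ge> 1"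
    if eF: "e \<in> F" for e
  proof -
    obtain e0 where e0: "e0 \<in> Ms" "e = s ` e0" using eF unfolding F_def by auto
    then have "e0 \<in> snd ?K" using MsE by auto
    then obtain c d where cd: "e0 = {c,d}" "c \<in> fst ?K" "d \<in> fst ?K" "fst c \<noteq> fst d" unfolding cm_E by blast
    have "s c \<in> fst ?G" "s d \<in> fst ?G" using cd(2,3) unfolding cm_V s_def by auto
    moreover have "e = {s c, s d}" using e0 cd by auto
    ultimately show ?thesis using cd(4) unfolding s_def by (intro exI[of _ "s c"] exI[of _ "s d"]) (auto simp: s_def)
  qed
  have Fdisj: "\<forall>e\<in>F. \<forall>e'\<in>F. e \<noteq> e' \<longrightarrow> e \<inter> e' = {}"
  proof (intro ballI impI)
    fix e e' assume e: "e \<in> F" and e': "e' \<in> F" and ne: "e \<noteq> e'"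
    obtain e0 where e0: "e0 \<in> Ms" "e = s ` e0" using e unfolding F_def by auto
    obtain e1 where e1: "e1 \<in> Ms" "e' = s ` e1" using e' unfolding F_def by auto
    have "e0 \<noteq> e1" using ne e0 e1 by auto
    then have "e0 \<inter> e1 = {}" using Msd e0 e1 by blast
    then have "s ` e0 \<inter> s ` e1 = {}" using image_Int[OF injs, of e0 e1] by simp
    then show "e \<inter> e' = {}" using e0 e1 by simp
  qed
  have F1: "\<forall>e\<in>F. \<exists>c d. e = {c,d} \<and> fst c \<noteq> fst d" using Fform by blast
  have F2: "\<forall>e\<in>F. e \<subseteq> U" unfolding U_def by auto
  have ro: "rp e \<in> e" "op e \<in> e" "rp e \<noteq> op e" "e = {rp e, op e}" "fst (rp e) \<noteq> fst (op e)"
    if eF: "e \<in> F" for e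
  proof -
    obtain c d where cd: "e = {c,d}" "fst c \<noteq> fst d" using F1 eF by blast
    then have "c \<noteq> d" by auto
    note r = rp_op[OF cd(1) this]
    then show "rp e \<in> e" "op e \<in> e" "rp e \<noteq> op e" "e = {rp e, op e}" by auto
    have "rp e \<in> {c,d}" "op e \<in> {c,d}" using r cd(1) by auto
    then have "(rp e = c \<and> op e = d) \<or> (rp e = d \<and> op e = c)" using r(3) by (metis empty_iff insertE)
    then show "fst (rp e) \<noteq> fst (op e)" using cd(2) by metis
  qed
  have Fv: "v \<in> fst ?G \<and> snd v \<ge> 1" if eF: "e \<in> F" and ve: "v \<in> e" for e v
  proof -
    obtain c d where "e = {c,d}" "c \<in> fst ?G \<and> d \<in> fst ?G \<and> snd c \<ge> 1 \<and> snd d \<ge> 1"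
      using Fform[OF eF] by blast
    moreover have "v = c \<or> v = d" using ve calculation(1) by blast
    ultimately show ?thesis by blast
  qed
  have TV: "T \<subseteq> fst ?G" unfolding T_def cm_V using n1 by auto
  have UV: "U \<subseteq> fst ?G" unfolding U_def using TV Fv by blast
  define S where "S = (U, edges_of U (\<lambda>x. {x}))"
  have sub: "subgraph S ?G"
    unfolding subgraph_def S_def
  proof (intro conjI)
    show "fst (U, edges_of U (\<lambda>x. {x})) \<subseteq> fst ?G" using UV by simp
    show "snd (U, edges_of U (\<lambda>x. {x})) \<subseteq> snd ?G"
    proof
      fix e assume "e \<in> snd (U, edges_of U (\<lambda>x. {x}))"
      then have "e \<in> edges_of U (\<lambda>x. {x})" by simp
      then obtain x y where xy: "e = {x,y}" "x \<in> U" "y \<in> U" "crs {x} {y}" unfolding mem_edges by blast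
      then have "fst x \<noteq> fst y" unfolding crs_def by auto
      then show "e \<in> snd ?G" unfolding cm_E using xy UV by blast
    qed
    show "\<forall>e\<in>snd (U, edges_of U (\<lambda>x. {x})). e \<subseteq> fst (U, edges_of U (\<lambda>x. {x}))"
    proof
      fix e assume "e \<in> snd (U, edges_of U (\<lambda>x. {x}))"
      then have "e \<in> edges_of U (\<lambda>x. {x})" by simp
      then obtain x y where xy: "e = {x,y}" "x \<in> U" "y \<in> U" unfolding mem_edges by blast
      then show "e \<subseteq> fst (U, edges_of U (\<lambda>x. {x}))" by simp
    qed
  qed
  define W where "W = U - op ` F"
  have ct: "contracts_to S (W, edges_of W (bt F))"
    unfolding S_def W_def by (rule contract_family[OF finF F1 F2 Fdisj])
  have Tsnd: "x \<in> T \<Longrightarrow> snd x = 0" for x unfolding T_def by auto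
  have W_eq: "W = T \<union> rp ` F"
  proof
    show "W \<subseteq> T \<union> rp ` F"
    proof
      fix x assume "x \<in> W"
      then have x: "x \<in> U" "x \<notin> op ` F" unfolding W_def by auto
      show "x \<in> T \<union> rp ` F"
      proof (cases "x \<in> T")
        case False
        then obtain e where e: "e \<in> F" "x \<in> e" using x unfolding U_def by auto
        then have "x = rp e \<or> x = op e" using ro[OF e(1)] by blast
        then show ?thesis using x e by auto
      qed simp
    qed
  next
    show "T \<union> rp ` F \<subseteq> W"
    proof
      fix x assume x: "x \<in> T \<union> rp ` F"
      have "x \<in> U" using x ro unfolding U_def by blast
      moreover have "x \<notin> op ` F"
      proof
        assume "x \<in> op ` F"
        then obtain e where e: "e \<in> F" "x = op e" by auto
        show False
        proof (cases "x \<in> T")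
          case True
          then show False using Tsnd Fv[OF e(1) ro(2)[OF e(1)]] e by auto
        next
          case False
          then obtain e' where e': "e' \<in> F" "x = rp e'" using x by auto
          have "x \<in> e" using e ro(2) by simp
          moreover have "x \<in> e'" using e' ro(1) by simp
          ultimately have "x \<in> e \<inter> e'" by simp
          then have "e = e'" using Fdisj e e' by blast
          then show False using ro(3)[OF e(1)] e e' by auto
        qed
      qed
      ultimately show "x \<in> W" unfolding W_def by auto
    qed
  qed
  have injrp: "inj_on rp F"
  proof (rule inj_onI)
    fix e e' assume "e \<in> F" "e' \<in> F" "rp e = rp e'"
    then have "rp e \<in> e \<inter> e'" using ro(1)[of e] ro(1)[of e'] by simp
    then show "e = e'" using Fdisj \<open>e \<in> F\<close> \<open>e' \<in> F\<close> by blast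
  qed
  have cardT: "card T = k" unfolding T_def by (subst card_image) (auto intro: inj_onI)
  have Trp: "T \<inter> rp ` F = {}"
  proof (rule ccontr)
    assume "T \<inter> rp ` F \<noteq> {}"
    then obtain e where e: "e \<in> F" "rp e \<in> T" by blast
    then show False using Tsnd[OF e(2)] Fv[OF e(1) ro(1)[OF e(1)]] by simp
  qed
  have finT: "finite T" unfolding T_def by simp
  have finW: "finite W" unfolding W_eq using finT finF by simp
  have cardW: "card W = k + card Ms"
  proof -
    have "card W = card T + card (rp ` F)" unfolding W_eq using card_Un_disjoint[OF finT _ Trp] finF by simp
    also have "card (rp ` F) = card F" using card_image[OF injrp] .
    also have "card F = card Ms" unfolding F_def
      by (rule card_image) (meson inj_onI inj_image_eq_iff[OF injs])
    finally show ?thesis using cardT by simp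
  qed
  have btx: "x \<in> bt F x" for x unfolding bt_def by auto
  have bte: "op e \<in> bt F (rp e)" if "e \<in> F" for e unfolding bt_def using that ro by blast
  have adj: "crs (bt F x) (bt F y)" if x: "x \<in> W" and y: "y \<in> W" and xy: "x \<noteq> y" for x y
  proof (cases "fst x = fst y")
    case False
    then show ?thesis unfolding crs_def using btx by blast
  next
    case True
    show ?thesis
    proof (cases "y \<in> rp ` F")
      case True
      then obtain e where e: "e \<in> F" "y = rp e" by auto
      then have "fst x \<noteq> fst (op e)" using ro(5)[OF e(1)] \<open>fst x = fst y\<close> by auto
      then show ?thesis unfolding crs_def using btx bte[OF e(1)] e by blast
    next
      case yT: False
      then have yT': "y \<in> T" using y W_eq by auto
      show ?thesis
      proof (cases "x \<in> rp ` F")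
        case True
        then obtain e where e: "e \<in> F" "x = rp e" by auto
        then have "fst (op e) \<noteq> fst y" using ro(5)[OF e(1)] \<open>fst x = fst y\<close> by auto
        then show ?thesis unfolding crs_def using btx bte[OF e(1)] e by blast
      next
        case False
        then have "x \<in> T" using x W_eq by auto
        then show ?thesis using yT' \<open>fst x = fst y\<close> xy unfolding T_def by auto
      qed
    qed
  qed
  obtain g where g: "bij_betw g W {0..<card W}" using ex_bij_betw_finite_nat[OF finW] by blast
  have iso: "graph_iso (W, edges_of W (bt F)) (complete_graph (card W))"
    unfolding graph_iso_def
  proof (intro exI conjI ballI)
    have "{0..<card W} = fst (complete_graph (card W))" unfolding complete_graph_def by auto
    then show "bij_betw g (fst (W, edges_of W (bt F))) (fst (complete_graph (card W)))" using g by simp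
    fix x y assume x: "x \<in> fst (W, edges_of W (bt F))" and y: "y \<in> fst (W, edges_of W (bt F))"
    then have xW: "x \<in> W" "y \<in> W" by auto
    have lt: "g x < card W" "g y < card W" using g xW unfolding bij_betw_def by auto
    have "g x = g y \<longleftrightarrow> x = y" using g xW unfolding bij_betw_def inj_on_def by blast
    then show "({x, y} \<in> snd (W, edges_of W (bt F))) = ({g x, g y} \<in> snd (complete_graph (card W)))"
      using kg[OF lt] adj[OF xW] xW unfolding mem_edges2 snd_conv by blast
  qed
  show ?thesis unfolding minor_def using sub ct iso cardW Ms(2) by metis
qed


lemma count_bound:
  fixes X :: "'x set" and \<beta> :: "'x \<Rightarrow> (nat\<times>nat) set"
  assumes n1: "\<forall>i<k. n i \<ge> 1"
  and fin: "finite X"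
  and NE: "\<forall>x\<in>X. \<beta> x \<noteq> {} \<and> \<beta> x \<subseteq> fst (complete_multipartite k n)"
  and D: "\<forall>x\<in>X. \<forall>y\<in>X. x \<noteq> y \<longrightarrow> \<beta> x \<inter> \<beta> y = {}"
  and SC: "\<forall>x\<in>X. (\<exists>a. \<beta> x = {a}) \<or> (\<exists>a\<in>\<beta> x. \<exists>b\<in>\<beta> x. fst a \<noteq> fst b)"
  and W: "\<forall>x\<in>X. \<forall>y\<in>X. x \<noteq> y \<longrightarrow> (\<exists>a\<in>\<beta> x. \<exists>b\<in>\<beta> y. fst a \<noteq> fst b)"
  shows "card X \<le> k + matching_number (complete_multipartite k (\<lambda>i. n i - 1))"
proof -
  define V where "V = fst (complete_multipartite k n)"
  have V: "v \<in> V \<longleftrightarrow> fst v < k \<and> snd v < n (fst v)" for v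
    unfolding V_def cm_V by (cases v) auto
  define X1 where "X1 = {x\<in>X. \<exists>a. \<beta> x = {a}}"
  define X2 where "X2 = X - X1"
  define a where "a x = the_elem (\<beta> x)" for x
  have a_eq: "\<beta> x = {a x}" if "x \<in> X1" for x
    using that unfolding X1_def a_def by auto
  have aV: "a x \<in> V" if "x \<in> X1" for x
    using a_eq[OF that] NE that unfolding X1_def V_def by auto
  define cls where "cls x = fst (a x)" for x
  have inj1: "inj_on cls X1"
  proof (rule inj_onI)
    fix x y assume x: "x \<in> X1" and y: "y \<in> X1" and c: "cls x = cls y"
    show "x = y"
    proof (rule ccontr)
      assume "x \<noteq> y"
      then obtain p q where "p \<in> \<beta> x" "q \<in> \<beta> y" "fst p \<noteq> fst q" using W x y unfolding X1_def by blast
      then show False using a_eq[OF x] a_eq[OF y] c unfolding cls_def by auto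
    qed
  qed
  define C where "C = cls ` X1"
  have CK: "C \<subseteq> {..<k}" using aV V unfolding C_def cls_def by auto
  have finX1: "finite X1" "finite X2" using fin unfolding X1_def X2_def by auto
  have cardC: "card C = card X1" unfolding C_def using card_image[OF inj1] .
  have cardX1: "card X1 \<le> k" using card_mono[OF _ CK] cardC by auto
  have ex2: "\<exists>p. fst p \<in> \<beta> x \<and> snd p \<in> \<beta> x \<and> fst (fst p) \<noteq> fst (snd p)" if "x \<in> X2" for x
  proof -
    have "x \<in> X" "\<not> (\<exists>a. \<beta> x = {a})" using that unfolding X2_def X1_def by auto
    then obtain p q where "p \<in> \<beta> x" "q \<in> \<beta> x" "fst p \<noteq> fst q" using SC by blast
    then show ?thesis by (intro exI[of _ "(p,q)"]) auto
  qed
  define pr where "pr x = (SOME p. fst p \<in> \<beta> x \<and> snd p \<in> \<beta> x \<and> fst (fst p) \<noteq> fst (snd p))" for x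
  have pr: "fst (pr x) \<in> \<beta> x \<and> snd (pr x) \<in> \<beta> x \<and> fst (fst (pr x)) \<noteq> fst (snd (pr x))" if "x \<in> X2" for x
    unfolding pr_def using someI_ex[OF ex2[OF that]] .
  define e where "e x = {fst (pr x), snd (pr x)}" for x
  have e_sub: "e x \<subseteq> \<beta> x" if "x \<in> X2" for x using pr[OF that] unfolding e_def by auto
  have X2X: "X2 \<subseteq> X" "X1 \<subseteq> X" unfolding X2_def X1_def by auto
  have injE: "inj_on e X2"
  proof (rule inj_onI)
    fix x y assume x: "x \<in> X2" and y: "y \<in> X2" and c: "e x = e y"
    show "x = y"
    proof (rule ccontr)
      assume "x \<noteq> y"
      then have "\<beta> x \<inter> \<beta> y = {}" using D x y X2X by blast
      then show False using e_sub[OF x] e_sub[OF y] c unfolding e_def by auto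
    qed
  qed
  define M0 where "M0 = e ` X2"
  have cardM0: "card M0 = card X2" unfolding M0_def using card_image[OF injE] .
  have finM0: "finite M0" unfolding M0_def using finX1 by auto
  define r where "r i = (if i \<in> C then snd (a (inv_into X1 cls i)) else 0)" for i
  have r_cls: "r (cls x) = snd (a x)" if "x \<in> X1" for x
    using that inv_into_f_f[OF inj1 that] unfolding r_def C_def by auto
  have r_lt: "r i < n i" if "i < k" for i
  proof (cases "i \<in> C")
    case True
    then obtain x where x: "x \<in> X1" "i = cls x" unfolding C_def by auto
    then show ?thesis using r_cls[OF x(1)] aV[OF x(1)] V unfolding cls_def by auto
  next
    case False
    then show ?thesis using n1 that unfolding r_def by auto
  qed
  define M1 where "M1 = {f\<in>M0. \<forall>v\<in>f. snd v \<noteq> r (fst v)}"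
  define Kl where "Kl = M0 - M1"
  have M1M0: "M1 \<subseteq> M0" unfolding M1_def by auto
  have cardsplit: "card M0 = card M1 + card Kl"
    unfolding Kl_def using card_Diff_subset[OF finite_subset[OF M1M0 finM0] M1M0] card_mono[OF finM0 M1M0] by auto
  define F where "F i = {f\<in>M0. (i, r i) \<in> f}" for i
  have KlF: "Kl \<subseteq> (\<Union>i\<in>{..<k} - C. F i)"
  proof
    fix f assume f: "f \<in> Kl"
    then obtain y where y: "y \<in> X2" "f = e y" unfolding Kl_def M0_def by auto
    from f obtain v where v: "v \<in> f" "snd v = r (fst v)" unfolding Kl_def M1_def by auto
    have vb: "v \<in> \<beta> y" using e_sub[OF y(1)] y v by auto
    then have "v \<in> V" using NE X2X y unfolding V_def by auto
    then have vk: "fst v < k" using V by auto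
    have "fst v \<notin> C"
    proof
      assume "fst v \<in> C"
      then obtain x where x: "x \<in> X1" "fst v = cls x" unfolding C_def by auto
      then have "v = a x" using v r_cls[OF x(1)] unfolding cls_def by (cases v, cases "a x") auto
      then have "v \<in> \<beta> x" using a_eq[OF x(1)] by auto
      moreover have "x \<noteq> y" using x y unfolding X2_def by auto
      ultimately show False using D vb X2X x y by blast
    qed
    moreover have "f \<in> F (fst v)" unfolding F_def using f v unfolding Kl_def by (cases v) auto
    ultimately show "f \<in> (\<Union>i\<in>{..<k} - C. F i)" using vk by auto
  qed
  have F1: "card (F i) \<le> 1" for i
  proof -
    have "finite (F i)" unfolding F_def using finM0 by auto
    moreover have "\<forall>f\<in>F i. \<forall>g\<in>F i. f = g"
    proof (intro ballI)
      fix f g assume f: "f \<in> F i" and g: "g \<in> F i"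
      then obtain x y where x: "x \<in> X2" "f = e x" and y: "y \<in> X2" "g = e y" unfolding F_def M0_def by auto
      have "(i, r i) \<in> \<beta> x" "(i, r i) \<in> \<beta> y" using f g x y e_sub unfolding F_def by auto
      then have "x = y" using D x y X2X by blast
      then show "f = g" using x y by auto
    qed
    ultimately show ?thesis using card_le_Suc0_iff_eq by auto
  qed
  have "card Kl \<le> card (\<Union>i\<in>{..<k} - C. F i)"
    using KlF by (intro card_mono) (auto simp: F_def finM0)
  also have "\<dots> \<le> (\<Sum>i\<in>{..<k} - C. card (F i))" by (rule card_UN_le) auto
  also have "\<dots> \<le> (\<Sum>i\<in>{..<k} - C. 1)" by (intro sum_mono F1)
  also have "\<dots> = k - card X1" using card_Diff_subset[OF finite_subset[OF CK] CK] cardC by auto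
  finally have cardKl: "card Kl \<le> k - card X1" .
  define \<phi> where "\<phi> v = (fst v, sw (r (fst v)) (n (fst v) - 1) (snd v))" for v :: "nat \<times> nat"
  have inj\<phi>: "inj \<phi>"
    by (rule injI) (auto simp: \<phi>_def prod_eq_iff dest: sw_inj)
  define M2 where "M2 = image \<phi> ` M1"
  have injM: "inj_on (image \<phi>) M1"
    by (rule inj_onI) (simp add: inj_image_eq_iff[OF inj\<phi>])
  have cardM2: "card M2 = card M1" unfolding M2_def using card_image[OF injM] .
  have M0form: "\<exists>c d. f = {c,d} \<and> c \<in> V \<and> d \<in> V \<and> fst c \<noteq> fst d" if fM: "f \<in> M0" for f
  proof -
    obtain y where y: "y \<in> X2" "f = e y" using fM unfolding M0_def by blast
    have "e y \<subseteq> V" using e_sub[OF y(1)] NE X2X y unfolding V_def by blast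
    then have "fst (pr y) \<in> V" "snd (pr y) \<in> V" unfolding e_def by auto
    then show ?thesis using pr[OF y(1)] y unfolding e_def by blast
  qed
  have M0disj: "f \<inter> g = {}" if "f \<in> M0" "g \<in> M0" "f \<noteq> g" for f g
  proof -
    note fg = that
    obtain x y where x: "x \<in> X2" "f = e x" and y: "y \<in> X2" "g = e y" using fg unfolding M0_def by blast
    then have "x \<noteq> y" using fg by auto
    then have "\<beta> x \<inter> \<beta> y = {}" using D x y X2X by blast
    then show ?thesis using e_sub x y by blast
  qed
  have \<phi>V: "\<phi> v \<in> fst (complete_multipartite k (\<lambda>i. n i - 1)) \<and> fst (\<phi> v) = fst v"
    if "v \<in> V" "snd v \<noteq> r (fst v)" for v
    using that sw_lt[of "snd v" "n (fst v)" "r (fst v)"] r_lt[of "fst v"] V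
    unfolding cm_V \<phi>_def by auto
  have "matching (complete_multipartite k (\<lambda>i. n i - 1)) M2"
    unfolding matching_def
  proof (intro conjI ballI impI subsetI)
    fix f assume "f \<in> M2"
    then obtain f0 where f0: "f0 \<in> M1" "f = \<phi> ` f0" unfolding M2_def by auto
    then obtain c d where cd: "f0 = {c,d}" "c \<in> V" "d \<in> V" "fst c \<noteq> fst d" using M0form M1M0 by blast
    have "snd c \<noteq> r (fst c)" "snd d \<noteq> r (fst d)" using f0 cd unfolding M1_def by auto
    then have "\<phi> c \<in> fst (complete_multipartite k (\<lambda>i. n i - 1)) \<and> fst (\<phi> c) = fst c"
      "\<phi> d \<in> fst (complete_multipartite k (\<lambda>i. n i - 1)) \<and> fst (\<phi> d) = fst d"
      using \<phi>V cd by auto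
    moreover have "f = {\<phi> c, \<phi> d}" using f0 cd by auto
    ultimately show "f \<in> snd (complete_multipartite k (\<lambda>i. n i - 1))"
      unfolding cm_E using cd(4) by metis
  next
    fix f g assume f: "f \<in> M2" and g: "g \<in> M2" and fg: "f \<noteq> g"
    then obtain f0 g0 where f0: "f0 \<in> M1" "f = \<phi> ` f0" and g0: "g0 \<in> M1" "g = \<phi> ` g0" unfolding M2_def by auto
    then have "f0 \<noteq> g0" using fg by auto
    then have "f0 \<inter> g0 = {}" using M0disj f0 g0 M1M0 by blast
    then have "\<phi> ` f0 \<inter> \<phi> ` g0 = {}" using image_Int[OF inj\<phi>, of f0 g0] by simp
    then show "f \<inter> g = {}" using f0 g0 by simp
  qed
  then have "card M2 \<le> matching_number (complete_multipartite k (\<lambda>i. n i - 1))" by (rule mn_ge)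
  have "card X = card X1 + card X2"
    using card_Un_disjoint[OF finX1] X2X unfolding X2_def
    by (metis Diff_partition Diff_disjoint)
  then show ?thesis
    using cardM0 cardsplit cardKl cardX1 cardM2 \<open>card M2 \<le> _\<close> by linarith
qed



lemma upper:
  assumes n1: "\<forall>i<k. n i \<ge> 1"
  and mi: "minor (complete_graph t) (complete_multipartite k n)"
  shows "t \<le> k + matching_number (complete_multipartite k (\<lambda>i. n i - 1))"
proof -
  obtain S M where SM: "subgraph S (complete_multipartite k n)" "contracts_to S M" "graph_iso M (complete_graph t)"
    using mi unfolding minor_def by blast
  obtain \<beta> where I: "inv_model (fst (complete_multipartite k n)) M \<beta>"
    using model_exists[OF SM(2) SM(1)] by blast
  obtain f where f: "bij_betw f (fst M) (fst (complete_graph t))"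
    "\<forall>x\<in>fst M. \<forall>y\<in>fst M. {x, y} \<in> snd M \<longleftrightarrow> {f x, f y} \<in> snd (complete_graph t)"
    using SM(3) unfolding graph_iso_def by blast
  have Kt: "fst (complete_graph t) = {..<t}" unfolding complete_graph_def by simp
  have finM: "finite (fst M)" using bij_betw_finite f(1) unfolding Kt by blast
  have cardM: "card (fst M) = t" using bij_betw_same_card[OF f(1)] unfolding Kt by simp
  have NE: "\<forall>x\<in>fst M. \<beta> x \<noteq> {} \<and> \<beta> x \<subseteq> fst (complete_multipartite k n)"
   and D: "\<forall>x\<in>fst M. \<forall>y\<in>fst M. x \<noteq> y \<longrightarrow> \<beta> x \<inter> \<beta> y = {}"
   and SC: "\<forall>x\<in>fst M. (\<exists>a. \<beta> x = {a}) \<or> (\<exists>a\<in>\<beta> x. \<exists>b\<in>\<beta> x. fst a \<noteq> fst b)"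
   and Wd: "\<forall>x y. {x,y} \<in> snd M \<longrightarrow> (\<exists>a\<in>\<beta> x. \<exists>b\<in>\<beta> y. fst a \<noteq> fst b)"
    using I unfolding inv_model_def by blast+
  have W: "\<forall>x\<in>fst M. \<forall>y\<in>fst M. x \<noteq> y \<longrightarrow> (\<exists>a\<in>\<beta> x. \<exists>b\<in>\<beta> y. fst a \<noteq> fst b)"
  proof (intro ballI impI)
    fix x y assume x: "x \<in> fst M" and y: "y \<in> fst M" and xy: "x \<noteq> y"
    have "f x \<noteq> f y" using f(1) x y xy unfolding bij_betw_def inj_on_def by blast
    moreover have "f x < t" "f y < t" using f(1) x y unfolding bij_betw_def Kt by auto
    ultimately have "{f x, f y} \<in> snd (complete_graph t)" using kg by blast
    then have "{x,y} \<in> snd M" using f(2) x y by blast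
    then show "\<exists>a\<in>\<beta> x. \<exists>b\<in>\<beta> y. fst a \<noteq> fst b" using Wd by blast
  qed
  show ?thesis using count_bound[OF n1 finM NE D SC W] cardM by simp
qed

theorem lemma4:
  fixes k :: nat and n :: "nat \<Rightarrow> nat"
  assumes "\<forall>i<k. n i \<ge> 1"
  shows "hadwiger (complete_multipartite k n)
           = k + matching_number (complete_multipartite k (\<lambda>i. n i - 1))"
proof -
  let ?m = "k + matching_number (complete_multipartite k (\<lambda>i. n i - 1))"
  let ?A = "{t. minor (complete_graph t) (complete_multipartite k n)}"
  have bd: "\<And>t. t \<in> ?A \<Longrightarrow> t \<le> ?m" using upper[OF assms] by blast
  have fin: "finite ?A" by (rule finite_subset[of _ "{..?m}"]) (use bd in auto)
  have mem: "?m \<in> ?A" using lower[OF assms] by simp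
  show ?thesis unfolding hadwiger_def by (rule Max_eqI[OF fin bd mem])
qed


end
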